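(* Let $A$ be a finite set of lines in $\mathbb{R}^2$. For every open halfplane $S_1$ and every set $S_2\subseteq\mathbb{R}^2$, $$\mu_A(S_1\cup S_2)\le \mu_A(S_1)\,\mu_A(S_2).$$
   Context: For a finite set $A$ of lines in $\mathbb{R}^2$, $V(A)$ denotes the set of all intersection points of pairs of lines of $A$. For $S\subseteq\mathbb{R}^2$, $\mu_A(S)=\max\{|A'| : A'\subseteq A,\ V(A')\subseteq S\}$ (so $\mu_A(S)\ge 1$ whenever $A\neq\emptyset$). *)

theory Defs
  imports "HOL-Analysis.Analysis"
begin

definition is_line :: "(real^2) set \<Rightarrow> bool" where
  "is_line L \<longleftrightarrow> (\<exists>p v. v \<noteq> 0 \<and> L = {p + t *\<^sub>R v | t. True})"

definition V :: "(real^2) set set \<Rightarrow> (real^2) set" where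
  "V A = (\<Union>{L1 \<inter> L2 | L1 L2. L1 \<in> A \<and> L2 \<in> A \<and> L1 \<noteq> L2})"

definition mu :: "(real^2) set set \<Rightarrow> (real^2) set \<Rightarrow> nat" where
  "mu A S = Max {card A' | A'. A' \<subseteq> A \<and> V A' \<subseteq> S}"

definition open_halfplane :: "(real^2) set \<Rightarrow> bool" where
  "open_halfplane H \<longleftrightarrow> (\<exists>a b. a \<noteq> 0 \<and> H = {x. a \<bullet> x > b})"

end

theory Submission
  imports Defs
begin

definition perp :: "real^2 \<Rightarrow> real^2" where
  "perp a = vector [-(a$2), a$1]"

lemma two_d:
  fixes a z :: "real^2"
  assumes "a \<noteq> 0" "a \<bullet> z = 0" "perp a \<bullet> z = 0"
  shows "z = 0"
proof -
  have e1: "a$1 * z$1 + a$2 * z$2 = 0" using assms(2) by (simp add: inner_vec_def sum_2)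
  have e2: "-(a$2) * z$1 + a$1 * z$2 = 0" using assms(3) by (simp add: inner_vec_def sum_2 perp_def)
  have "(a$1*a$1 + a$2*a$2) * z$1 = a$1 * (a$1 * z$1 + a$2 * z$2) - a$2 * (-(a$2) * z$1 + a$1 * z$2)"
    by (simp add: algebra_simps)
  hence h1: "(a$1*a$1 + a$2*a$2) * z$1 = 0" using e1 e2 by simp
  have "(a$1*a$1 + a$2*a$2) * z$2 = a$2 * (a$1 * z$1 + a$2 * z$2) + a$1 * (-(a$2) * z$1 + a$1 * z$2)"
    by (simp add: algebra_simps)
  hence h2: "(a$1*a$1 + a$2*a$2) * z$2 = 0" using e1 e2 by simp
  have "a$1 \<noteq> 0 \<or> a$2 \<noteq> 0" using assms(1) by (metis exhaust_2 vec_eq_iff zero_index)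
  hence "a$1*a$1 + a$2*a$2 > 0"
    by (metis add_pos_nonneg add_nonneg_pos not_real_square_gt_zero zero_le_square)
  hence "z$1 = 0" "z$2 = 0" using h1 h2 by auto
  thus ?thesis by (metis exhaust_2 vec_eq_iff zero_index)
qed

lemma poset_bound:
  fixes X :: "'a set" and R :: "'a \<Rightarrow> 'a \<Rightarrow> bool"
  assumes fin: "finite X"
    and irr: "\<And>x. x \<in> X \<Longrightarrow> \<not> R x x"
    and tr: "\<And>x y z. x \<in> X \<Longrightarrow> y \<in> X \<Longrightarrow> z \<in> X \<Longrightarrow> R x y \<Longrightarrow> R y z \<Longrightarrow> R x z"
    and ch: "\<And>C. C \<subseteq> X \<Longrightarrow> (\<forall>x\<in>C. \<forall>y\<in>C. x \<noteq> y \<longrightarrow> R x y \<or> R y x) \<Longrightarrow> card C \<le> p"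
    and an: "\<And>C. C \<subseteq> X \<Longrightarrow> (\<forall>x\<in>C. \<forall>y\<in>C. \<not> R x y) \<Longrightarrow> card C \<le> q"
  shows "card X \<le> p * q"
proof -
  define good where "good x C \<longleftrightarrow> C \<subseteq> X \<and> (\<forall>u\<in>C. \<forall>v\<in>C. u \<noteq> v \<longrightarrow> R u v \<or> R v u)
      \<and> x \<in> C \<and> (\<forall>y\<in>C. y = x \<or> R y x)" for x C
  define r where "r x = Max {card C | C. good x C}" for x
  have finS: "finite {card C | C. good x C}" for x
  proof -
    have "{card C | C. good x C} \<subseteq> card ` Pow X" unfolding good_def by auto
    thus ?thesis using fin finite_subset by blast
  qed
  have goodx: "x \<in> X \<Longrightarrow> good x {x}" for x unfolding good_def by auto
  have rge: "x \<in> X \<Longrightarrow> good x C \<Longrightarrow> card C \<le> r x" for x C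
    unfolding r_def using finS by (intro Max_ge) auto
  have rex: "x \<in> X \<Longrightarrow> \<exists>C. good x C \<and> card C = r x" for x
  proof -
    assume "x \<in> X"
    hence "{card C | C. good x C} \<noteq> {}" using goodx by blast
    from Max_in[OF finS this] show ?thesis unfolding r_def by auto
  qed
  have r1: "x \<in> X \<Longrightarrow> 1 \<le> r x" for x using rge[OF _ goodx] by fastforce
  have rp: "x \<in> X \<Longrightarrow> r x \<le> p" for x
    using rex ch unfolding good_def by metis
  have rlt: "x \<in> X \<Longrightarrow> y \<in> X \<Longrightarrow> R x y \<Longrightarrow> r x < r y" for x y
  proof -
    assume xX: "x \<in> X" and yX: "y \<in> X" and Rxy: "R x y"
    obtain C where gC: "good x C" and cC: "card C = r x" using rex[OF xX] by blast
    have CX: "C \<subseteq> X" using gC good_def by auto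
    have finC: "finite C" using CX fin finite_subset by blast
    have yC: "y \<notin> C"
    proof
      assume "y \<in> C"
      hence "y = x \<or> R y x" using gC good_def by auto
      thus False using Rxy irr tr xX yX by blast
    qed
    have Ry: "\<forall>u\<in>C. R u y"
    proof
      fix u assume uC: "u \<in> C"
      hence "u = x \<or> R u x" using gC good_def by auto
      thus "R u y" using tr[of u x y] uC CX xX yX Rxy by auto
    qed
    have "good y (insert y C)" using gC Ry yX unfolding good_def by auto
    hence "card (insert y C) \<le> r y" using rge yX by blast
    thus ?thesis using cC yC finC by simp
  qed
  have XU: "X = (\<Union>k\<in>{1..p}. {x\<in>X. r x = k})" using r1 rp by auto
  have "card X \<le> (\<Sum>k\<in>{1..p}. card {x\<in>X. r x = k})"
    by (subst XU) (rule card_UN_le, simp)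
  also have "\<dots> \<le> (\<Sum>k\<in>{1..p}. q)"
  proof (rule sum_mono)
    fix k assume "k \<in> {1..p}"
    show "card {x\<in>X. r x = k} \<le> q"
      by (rule an) (use rlt in fastforce)+
  qed
  also have "\<dots> = p * q" by simp
  finally show ?thesis .
qed


definition rep :: "(real^2) set \<Rightarrow> (real^2) \<times> (real^2)" where
  "rep L = (SOME pv. snd pv \<noteq> 0 \<and> L = {fst pv + t *\<^sub>R snd pv | t. True})"

definition P :: "(real^2) set \<Rightarrow> real^2" where "P L = fst (rep L)"
definition D :: "(real^2) set \<Rightarrow> real^2" where "D L = snd (rep L)"

lemma rep_ok:
  assumes "is_line L"
  shows "D L \<noteq> 0" "L = {P L + t *\<^sub>R D L | t. True}"
proof -
  obtain p v where "v \<noteq> 0 \<and> L = {p + t *\<^sub>R v | t. True}" using assms unfolding is_line_def by blast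
  hence "\<exists>pv. snd pv \<noteq> 0 \<and> L = {fst pv + t *\<^sub>R snd pv | t. True}" by (intro exI[of _ "(p,v)"]) auto
  from someI_ex[OF this] show "D L \<noteq> 0" "L = {P L + t *\<^sub>R D L | t. True}"
    unfolding P_def D_def rep_def by auto
qed

definition W :: "real^2 \<Rightarrow> (real^2) set \<Rightarrow> real^2" where
  "W a L = (1 / (a \<bullet> D L)) *\<^sub>R D L"
definition Q :: "real^2 \<Rightarrow> real \<Rightarrow> (real^2) set \<Rightarrow> real^2" where
  "Q a b L = P L - (a \<bullet> P L - b) *\<^sub>R W a L"
definition cc :: "real^2 \<Rightarrow> real \<Rightarrow> (real^2) set \<Rightarrow> real" where
  "cc a b L = perp a \<bullet> Q a b L"
definition ss :: "real^2 \<Rightarrow> (real^2) set \<Rightarrow> real" where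
  "ss a L = perp a \<bullet> W a L"

lemma aW: "a \<bullet> D L \<noteq> 0 \<Longrightarrow> a \<bullet> W a L = 1"
  by (simp add: W_def)

lemma aQ: "a \<bullet> D L \<noteq> 0 \<Longrightarrow> a \<bullet> Q a b L = b"
  by (simp add: Q_def inner_diff_right aW)

lemma low_pt:
  assumes "is_line L" "a \<bullet> D L = 0" "x \<in> L"
  shows "a \<bullet> x = a \<bullet> P L"
proof -
  obtain t where "x = P L + t *\<^sub>R D L" using rep_ok(2)[OF assms(1)] assms(3) by blast
  thus ?thesis using assms(2) by (simp add: inner_add_right)
qed

lemma cross_set:
  assumes "is_line L" "a \<bullet> D L \<noteq> 0"
  shows "L = {x. x = Q a b L + (a \<bullet> x - b) *\<^sub>R W a L}"
proof (intro set_eqI iffI)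
  fix x assume "x \<in> L"
  then obtain t where xt: "x = P L + t *\<^sub>R D L" using rep_ok(2)[OF assms(1)] by blast
  have "a \<bullet> x = a \<bullet> P L + t * (a \<bullet> D L)" using xt by (simp add: inner_add_right)
  hence "Q a b L + (a \<bullet> x - b) *\<^sub>R W a L = P L + (t * (a \<bullet> D L)) *\<^sub>R W a L"
    by (simp add: Q_def algebra_simps)
  also have "\<dots> = x" using xt assms(2) by (simp add: W_def)
  finally show "x \<in> {x. x = Q a b L + (a \<bullet> x - b) *\<^sub>R W a L}" by simp
next
  fix x assume "x \<in> {x. x = Q a b L + (a \<bullet> x - b) *\<^sub>R W a L}"
  hence xe: "x = Q a b L + (a \<bullet> x - b) *\<^sub>R W a L" by simp
  define t where "t = ((a \<bullet> x - b) - (a \<bullet> P L - b)) / (a \<bullet> D L)"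
  have "x = P L + t *\<^sub>R D L"
    apply (subst xe) using assms(2) by (simp add: Q_def W_def t_def algebra_simps diff_divide_distrib)
  thus "x \<in> L" using rep_ok(2)[OF assms(1)] by blast
qed

lemma cross_eq:
  assumes "is_line L" "a \<bullet> D L \<noteq> 0" "is_line M" "a \<bullet> D M \<noteq> 0" "x \<in> L" "x \<in> M"
  shows "cc a b L + (a \<bullet> x - b) * ss a L = cc a b M + (a \<bullet> x - b) * ss a M"
proof -
  have "Q a b L + (a \<bullet> x - b) *\<^sub>R W a L = Q a b M + (a \<bullet> x - b) *\<^sub>R W a M"
  proof -
    have 1: "x = Q a b L + (a \<bullet> x - b) *\<^sub>R W a L"
      using assms(5) by (subst (asm) cross_set[OF assms(1,2), of b]) simp
    have 2: "x = Q a b M + (a \<bullet> x - b) *\<^sub>R W a M"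
      using assms(6) by (subst (asm) cross_set[OF assms(3,4), of b]) simp
    show ?thesis using 1 2 by simp
  qed
  hence "perp a \<bullet> (Q a b L + (a \<bullet> x - b) *\<^sub>R W a L) = perp a \<bullet> (Q a b M + (a \<bullet> x - b) *\<^sub>R W a M)"
    by simp
  thus ?thesis by (simp add: cc_def ss_def inner_add_right)
qed

lemma cross_same:
  assumes "a \<noteq> 0" "is_line L" "a \<bullet> D L \<noteq> 0" "is_line M" "a \<bullet> D M \<noteq> 0"
    "cc a b L = cc a b M" "ss a L = ss a M"
  shows "L = M"
proof -
  have "Q a b L - Q a b M = 0"
    by (rule two_d[OF assms(1)]) (use assms aQ cc_def in \<open>simp_all add: inner_diff_right\<close>)
  moreover have "W a L - W a M = 0"
    by (rule two_d[OF assms(1)]) (use assms aW ss_def in \<open>simp_all add: inner_diff_right\<close>)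
  ultimately have "Q a b L = Q a b M" "W a L = W a M" by simp_all
  thus ?thesis by (subst cross_set[OF assms(2,3), of b], subst cross_set[OF assms(4,5), of b]) simp
qed


definition Rel :: "real^2 \<Rightarrow> real \<Rightarrow> ((real^2) set \<Rightarrow> nat) \<Rightarrow> (real^2) set \<Rightarrow> (real^2) set \<Rightarrow> bool" where
  "Rel a b f L M \<longleftrightarrow>
     (a \<bullet> D L \<noteq> 0 \<and> a \<bullet> D M \<noteq> 0 \<and> cc a b L \<le> cc a b M \<and> ss a L < ss a M)
   \<or> (a \<bullet> D L = 0 \<and> a \<bullet> P L \<le> b \<and> a \<bullet> D M \<noteq> 0)
   \<or> (a \<bullet> D L = 0 \<and> a \<bullet> P L \<le> b \<and> a \<bullet> D M = 0 \<and> a \<bullet> P M \<le> b \<and> f L < f M)"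

lemma Rel_irr: "\<not> Rel a b f L L" by (auto simp: Rel_def)

lemma Rel_trans: "Rel a b f L M \<Longrightarrow> Rel a b f M N \<Longrightarrow> Rel a b f L N"
  unfolding Rel_def by auto

lemma chain_pt:
  assumes "is_line L" "is_line M" "Rel a b f L M" "x \<in> L" "x \<in> M"
  shows "a \<bullet> x \<le> b"
proof (cases "a \<bullet> D L = 0")
  case True
  hence "a \<bullet> P L \<le> b" using assms(3) by (auto simp: Rel_def)
  thus ?thesis using low_pt[OF assms(1) True assms(4)] by simp
next
  case False
  hence c: "a \<bullet> D M \<noteq> 0" "cc a b L \<le> cc a b M" "ss a L < ss a M" using assms(3) by (auto simp: Rel_def)
  have e: "cc a b L + (a \<bullet> x - b) * ss a L = cc a b M + (a \<bullet> x - b) * ss a M"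
    using cross_eq[OF assms(1) False assms(2) c(1) assms(4,5)] .
  show ?thesis
  proof (rule ccontr)
    assume "\<not> a \<bullet> x \<le> b"
    hence "(a \<bullet> x - b) * ss a L < (a \<bullet> x - b) * ss a M" using c(3) by (intro mult_strict_left_mono) auto
    thus False using e c(2) by linarith
  qed
qed

lemma anti_pt:
  assumes "a \<noteq> 0" "is_line L" "is_line M" "L \<noteq> M" "\<not> Rel a b f L M" "\<not> Rel a b f M L"
    "x \<in> L" "x \<in> M" "inj_on f A" "L \<in> A" "M \<in> A"
  shows "a \<bullet> x > b"
proof -
  consider (Lh) "a \<bullet> D L = 0" "a \<bullet> P L > b" | (Mh) "a \<bullet> D M = 0" "a \<bullet> P M > b"
    | (LL) "a \<bullet> D L = 0" "a \<bullet> P L \<le> b" "a \<bullet> D M = 0" "a \<bullet> P M \<le> b"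
    | (LC) "a \<bullet> D L = 0" "a \<bullet> P L \<le> b" "a \<bullet> D M \<noteq> 0"
    | (CL) "a \<bullet> D M = 0" "a \<bullet> P M \<le> b" "a \<bullet> D L \<noteq> 0"
    | (CC) "a \<bullet> D L \<noteq> 0" "a \<bullet> D M \<noteq> 0" by linarith
  thus ?thesis
  proof cases
    case Lh thus ?thesis using low_pt[OF assms(2) Lh(1) assms(7)] by simp
  next
    case Mh thus ?thesis using low_pt[OF assms(3) Mh(1) assms(8)] by simp
  next
    case LL
    hence "f L = f M" using assms(5,6) by (auto simp: Rel_def)
    hence "L = M" using assms(9,10,11) by (meson inj_on_def)
    thus ?thesis using assms(4) by simp
  next
    case LC thus ?thesis using assms(5) by (auto simp: Rel_def)
  next
    case CL thus ?thesis using assms(6) by (auto simp: Rel_def)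
  next
    case CC
    have e: "cc a b L + (a \<bullet> x - b) * ss a L = cc a b M + (a \<bullet> x - b) * ss a M"
      using cross_eq[OF assms(2) CC(1) assms(3) CC(2) assms(7,8)] .
    have n1: "\<not> (cc a b L \<le> cc a b M \<and> ss a L < ss a M)" using assms(5) CC by (auto simp: Rel_def)
    have n2: "\<not> (cc a b M \<le> cc a b L \<and> ss a M < ss a L)" using assms(6) CC by (auto simp: Rel_def)
    show ?thesis
    proof (rule ccontr)
      assume h: "\<not> a \<bullet> x > b"
      consider "ss a L = ss a M" | "ss a L < ss a M" | "ss a M < ss a L" by linarith
      thus False
      proof cases
        case 1
        hence "cc a b L = cc a b M" using e by simp
        thus False using cross_same[OF assms(1,2) CC(1) assms(3) CC(2)] 1 assms(4) by blast
      next
        case 2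
        have "(a \<bullet> x - b) * ss a M \<le> (a \<bullet> x - b) * ss a L"
          using 2 h by (intro mult_left_mono_neg) auto
        thus False using e n1 2 by linarith
      next
        case 3
        have "(a \<bullet> x - b) * ss a L \<le> (a \<bullet> x - b) * ss a M"
          using 3 h by (intro mult_left_mono_neg) auto
        thus False using e n2 3 by linarith
      qed
    qed
  qed
qed

lemma V_mono: "B \<subseteq> C \<Longrightarrow> V B \<subseteq> V C"
  unfolding V_def by blast

lemma mu_ge:
  assumes "finite A" "B \<subseteq> A" "V B \<subseteq> S"
  shows "card B \<le> mu A S"
proof -
  have "finite {card A' | A'. A' \<subseteq> A \<and> V A' \<subseteq> S}"
  proof -
    have "{card A' | A'. A' \<subseteq> A \<and> V A' \<subseteq> S} \<subseteq> card ` Pow A" by auto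
    thus ?thesis using assms(1) finite_subset by blast
  qed
  thus ?thesis unfolding mu_def using assms(2,3) by (intro Max_ge) auto
qed

lemma mu_attained:
  assumes "finite A"
  shows "\<exists>B. B \<subseteq> A \<and> V B \<subseteq> S \<and> card B = mu A S"
proof -
  have fin: "finite {card A' | A'. A' \<subseteq> A \<and> V A' \<subseteq> S}"
  proof -
    have "{card A' | A'. A' \<subseteq> A \<and> V A' \<subseteq> S} \<subseteq> card ` Pow A" by auto
    thus ?thesis using assms(1) finite_subset by blast
  qed
  have "V {} = {}" unfolding V_def by auto
  hence ne: "{card A' | A'. A' \<subseteq> A \<and> V A' \<subseteq> S} \<noteq> {}" by blast
  from Max_in[OF fin ne] show ?thesis unfolding mu_def by auto
qed

theorem lemma1:
  fixes A :: "(real^2) set set" and S1 S2 :: "(real^2) set"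
  assumes "finite A" and "\<forall>L\<in>A. is_line L"
    and "open_halfplane S1"
  shows "mu A (S1 \<union> S2) \<le> mu A S1 * mu A S2"
proof -
  obtain a b where a0: "a \<noteq> 0" and S1d: "S1 = {x. a \<bullet> x > b}"
    using assms(3) unfolding open_halfplane_def by blast
  obtain f :: "(real^2) set \<Rightarrow> nat" where inj: "inj_on f A"
    using finite_imp_inj_to_nat_seg[OF assms(1)] by blast
  obtain B where BA: "B \<subseteq> A" and VB: "V B \<subseteq> S1 \<union> S2" and cB: "card B = mu A (S1 \<union> S2)"
    using mu_attained[OF assms(1)] by blast
  have finB: "finite B" using BA assms(1) finite_subset by blast
  have lines: "\<And>L. L \<in> B \<Longrightarrow> is_line L" using BA assms(2) by blast
  have "card B \<le> mu A S2 * mu A S1"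
  proof (rule poset_bound[OF finB, where R = "Rel a b f"])
    show "\<And>x. \<not> Rel a b f x x" by (rule Rel_irr)
    show "\<And>x y z. Rel a b f x y \<Longrightarrow> Rel a b f y z \<Longrightarrow> Rel a b f x z" by (rule Rel_trans)
  next
    fix C assume CB: "C \<subseteq> B" and chC: "\<forall>x\<in>C. \<forall>y\<in>C. x \<noteq> y \<longrightarrow> Rel a b f x y \<or> Rel a b f y x"
    have "V C \<subseteq> S2"
    proof
      fix x assume "x \<in> V C"
      then obtain L M where LM: "L \<in> C" "M \<in> C" "L \<noteq> M" "x \<in> L" "x \<in> M" unfolding V_def by blast
      have "a \<bullet> x \<le> b"
      proof -
        have lL: "is_line L" "is_line M" using LM(1,2) CB lines by auto
        have "Rel a b f L M \<or> Rel a b f M L" using chC LM(1,2,3) by blast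
        thus ?thesis using chain_pt[OF lL(1,2) _ LM(4,5)] chain_pt[OF lL(2,1) _ LM(5,4)] by blast
      qed
      moreover have "x \<in> S1 \<union> S2" using VB V_mono[OF CB] \<open>x \<in> V C\<close> by blast
      ultimately show "x \<in> S2" using S1d by auto
    qed
    thus "card C \<le> mu A S2" using mu_ge[OF assms(1)] CB BA by blast
  next
    fix C assume CB: "C \<subseteq> B" and anC: "\<forall>x\<in>C. \<forall>y\<in>C. \<not> Rel a b f x y"
    have "V C \<subseteq> S1"
    proof
      fix x assume "x \<in> V C"
      then obtain L M where LM: "L \<in> C" "M \<in> C" "L \<noteq> M" "x \<in> L" "x \<in> M" unfolding V_def by blast
      have "a \<bullet> x > b"
      proof -
        have lL: "L \<in> B" "M \<in> B" using LM(1,2) CB by auto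
        have "\<not> Rel a b f L M" "\<not> Rel a b f M L" using anC LM(1,2) by auto
        thus ?thesis using anti_pt[OF a0 lines[OF lL(1)] lines[OF lL(2)] LM(3) _ _ LM(4,5) inj] lL BA by blast
      qed
      thus "x \<in> S1" using S1d by auto
    qed
    thus "card C \<le> mu A S1" using mu_ge[OF assms(1)] CB BA by blast
  qed
  thus ?thesis using cB by (simp add: mult.commute)
qed

end
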